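(* Let $N$ be a finite set with $|N|\ge 2$ and let $\mathcal{D}\subseteq\mathrm{DAG}(N)$ be a facet of $P_N$ which does not contain the empty graph. Then $\mathcal{D}$ is closed under super-graphs: if $G\in\mathcal{D}$ is a subgraph of $H\in\mathrm{DAG}(N)$, then $H\in\mathcal{D}$. Moreover, for every $(a|B)\in\Upsilon$ there exists $G\in\mathcal{D}$ with $\mathrm{pa}_G(a)=B$.
   Context: $\mathrm{DAG}(N)$ is the set of acyclic directed graphs over $N$; $\mathrm{pa}_G(a)$ is the parent set of $a$ in $G$; the empty graph has no arrows. $\Upsilon=\{(a|B): a\in N,\ \emptyset\neq B\subseteq N\setminus\{a\}\}$; $\eta_G\in\mathbb{R}^{\Upsilon}$ has $\eta_G(a|B)=1$ if $B=\mathrm{pa}_G(a)$, else $0$; $P_N=\mathrm{conv}\{\eta_G:G\in\mathrm{DAG}(N)\}$. A set $\mathcal{D}\subseteq\mathrm{DAG}(N)$ is called a facet of $P_N$ if $\mathrm{conv}\{\eta_G:G\in\mathcal{D}\}$ is a facet of $P_N$. *)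

theory Defs
  imports "HOL-Analysis.Analysis"
begin

text \<open>The ground set N is the universe of a finite type 'n.
  A directed graph over N is its set of arrows (b,a) meaning b -> a.\<close>

definition DAG :: "('n::finite \<times> 'n) set set" where
  "DAG = {E. acyclic E}"

definition pa :: "('n \<times> 'n) set \<Rightarrow> 'n \<Rightarrow> 'n set" where
  "pa G a = {b. (b, a) \<in> G}"

definition Upsilon :: "('n \<times> 'n set) set" where
  "Upsilon = {(a, B). B \<noteq> {} \<and> a \<notin> B}"

text \<open>eta G lives in real^('n \<times> 'n set); coordinates outside Upsilon are always 0,
  so this is an affine-isomorphic copy of R^Upsilon.\<close>

definition eta :: "('n::finite \<times> 'n) set \<Rightarrow> real ^ ('n \<times> 'n set)" where
  "eta G = (\<chi> i. if i \<in> Upsilon \<and> snd i = pa G (fst i) then 1 else 0)"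

definition P_N :: "(real ^ ('n::finite \<times> 'n set)) set" where
  "P_N = convex hull (eta ` DAG)"

definition is_facet :: "'a::euclidean_space set \<Rightarrow> 'a set \<Rightarrow> bool" where
  "is_facet F P \<longleftrightarrow> F face_of P \<and> aff_dim F = aff_dim P - 1"

end

theory Submission
  imports Defs
begin

definition cc :: "real ^ ('n::finite \<times> 'n set) \<Rightarrow> 'n \<Rightarrow> 'n set \<Rightarrow> real" where
  "cc a v B = (if (v,B) \<in> Upsilon then a$(v,B) else 0)"

lemma ell_eq: "a \<bullet> eta K = (\<Sum>w\<in>UNIV. cc a w (pa K w))"
proof -
  let ?f = "\<lambda>i. (if i \<in> Upsilon \<and> snd i = pa K (fst i) then a$i else 0)"
  have "a \<bullet> eta K = (\<Sum>i\<in>UNIV. ?f i)"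
    unfolding inner_vec_def eta_def by (intro sum.cong) auto
  also have "\<dots> = (\<Sum>i\<in>UNIV \<times> UNIV. ?f i)"
    by simp
  also have "\<dots> = (\<Sum>w\<in>UNIV. \<Sum>S\<in>UNIV. ?f (w,S))"
    by (simp only: sum.cartesian_product case_prod_unfold prod.collapse)
  also have "\<dots> = (\<Sum>w\<in>UNIV. cc a w (pa K w))"
  proof (rule sum.cong[OF refl])
    fix w
    have "(\<Sum>S\<in>UNIV. ?f (w,S)) = (\<Sum>S\<in>UNIV. if S = pa K w then cc a w S else 0)"
      by (rule sum.cong) (auto simp: cc_def)
    also have "\<dots> = cc a w (pa K w)" by simp
    finally show "(\<Sum>S\<in>UNIV. ?f (w,S)) = cc a w (pa K w)" .
  qed
  finally show ?thesis .
qed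

definition Bx :: "(real ^ 'i) set" where
  "Bx = {x. \<forall>i. 0 \<le> x$i \<and> x$i \<le> 1}"

lemma convex_Bx: "convex Bx"
  unfolding convex_def Bx_def
  by (auto intro: convex_bound_le simp: mult_nonneg_nonneg add_nonneg_nonneg)

lemma eta_Bx: "eta K \<in> Bx"
  by (simp add: Bx_def eta_def)

lemma hull_Bx: "convex hull (eta ` S) \<subseteq> Bx"
  by (rule hull_minimal) (auto simp: eta_Bx convex_Bx)

lemma real01:
  fixes u p q :: real
  assumes "0 < u" "u < 1" "0 \<le> p" "p \<le> 1" "0 \<le> q" "q \<le> 1"
    and "(1-u)*p + u*q = 0 \<or> (1-u)*p + u*q = 1"
  shows "p = q"
proof -
  have a: "(1-u)*p \<ge> 0" "u*q \<ge> 0" "(1-u)*(1-p) \<ge> 0" "u*(1-q) \<ge> 0"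
    using assms by auto
  from assms(7) show ?thesis
  proof
    assume h: "(1-u)*p + u*q = 0"
    then have "(1-u)*p = 0" "u*q = 0" using a by linarith+
    then show ?thesis using assms by auto
  next
    assume h: "(1-u)*p + u*q = 1"
    have "(1-u)*(1-p) + u*(1-q) = 0" using h by (simp add: algebra_simps)
    then have "(1-u)*(1-p) = 0" "u*(1-q) = 0" using a by linarith+
    then show ?thesis using assms by auto
  qed
qed

lemma extreme_01:
  fixes x :: "real ^ 'i"
  assumes "x \<in> S" "S \<subseteq> Bx" "\<And>i. x$i = 0 \<or> x$i = 1"
  shows "x extreme_point_of S"
  unfolding extreme_point_of_def
proof (intro conjI ballI assms(1))
  fix p q assume pq: "p \<in> S" "q \<in> S"
  show "x \<notin> open_segment p q"
  proof
    assume "x \<in> open_segment p q"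
    then obtain u where u: "p \<noteq> q" "0 < u" "u < 1" "x = (1-u) *\<^sub>R p + u *\<^sub>R q"
      by (auto simp: in_segment)
    have "p = q"
    proof (rule vec_eq_iff[THEN iffD2], rule allI)
      fix i
      have "x$i = (1-u)*p$i + u*q$i" using u by simp
      moreover have "0 \<le> p$i" "p$i \<le> 1" "0 \<le> q$i" "q$i \<le> 1"
        using pq assms(2) by (auto simp: Bx_def)
      ultimately show "p$i = q$i" using real01[of u "p$i" "q$i"] u assms(3)[of i] by auto
    qed
    then show False using u by simp
  qed
qed

lemma eta_01: "eta K $ i = 0 \<or> eta K $ i = 1"
  by (simp add: eta_def)

lemma acyclic_irr: "acyclic K \<Longrightarrow> (w,w) \<notin> K"
  unfolding acyclic_def by blast

lemma eta_inj:
  assumes "acyclic G" "acyclic H" "eta G = eta H"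
  shows "G = H"
proof -
  have "pa G w = pa H w" for w
  proof (rule ccontr)
    assume ne: "pa G w \<noteq> pa H w"
    have "w \<notin> pa G w" "w \<notin> pa H w" using acyclic_irr[OF assms(1)] acyclic_irr[OF assms(2)] by (auto simp: pa_def)
    show False
    proof (cases "pa G w = {}")
      case True
      then have "(w, pa H w) \<in> Upsilon" using ne \<open>w \<notin> pa H w\<close> by (auto simp: Upsilon_def)
      then have "eta H $ (w, pa H w) = 1" "eta G $ (w, pa H w) = 0"
        using ne by (auto simp: eta_def)
      then show False using assms(3) by simp
    next
      case False
      then have "(w, pa G w) \<in> Upsilon" using \<open>w \<notin> pa G w\<close> by (auto simp: Upsilon_def)
      then have "eta G $ (w, pa G w) = 1" "eta H $ (w, pa G w) = 0"
        using ne by (auto simp: eta_def)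
      then show False using assms(3) by simp
    qed
  qed
  then show ?thesis unfolding pa_def by auto
qed

lemma mem_hull_imp:
  assumes "H \<in> DAG" "D \<subseteq> DAG" "eta H \<in> convex hull (eta ` D)"
  shows "H \<in> D"
proof -
  have "eta H extreme_point_of (convex hull (eta ` D))"
    by (rule extreme_01[OF assms(3) hull_Bx eta_01])
  then have "eta H \<in> eta ` D" by (rule extreme_point_of_convex_hull)
  then obtain G where "G \<in> D" "eta H = eta G" by auto
  then show ?thesis using eta_inj[of H G] assms by (auto simp: DAG_def)
qed

lemma star_acyclic:
  fixes B :: "'n set"
  assumes "v \<notin> B"
  shows "acyclic ((\<lambda>x. (x,v)) ` B)"
proof -
  let ?r = "(\<lambda>x. (x,v)) ` B"
  have "(x,y) \<in> ?r" if "(x,y) \<in> ?r\<^sup>+" for x y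
    using that
  proof (induction rule: trancl_induct)
    case (base y) then show ?case .
  next
    case (step y z) then show ?case using assms by auto
  qed
  then show ?thesis unfolding acyclic_def using assms by auto
qed

theorem corollary2:
  fixes D :: "('n::finite \<times> 'n) set set"
  assumes "CARD('n) \<ge> 2"
    and "D \<subseteq> DAG"
    and "is_facet (convex hull (eta ` D)) (P_N :: (real ^ ('n \<times> 'n set)) set)"
    and "{} \<notin> D"
  shows "(\<forall>G\<in>D. \<forall>H\<in>DAG. G \<subseteq> H \<longrightarrow> H \<in> D)
    \<and> (\<forall>(a, B)\<in>(Upsilon :: ('n \<times> 'n set) set). \<exists>G\<in>D. pa G a = B)"
proof -
  define P :: "(real ^ ('n \<times> 'n set)) set" where "P = P_N"
  define F where "F = convex hull (eta ` D)"
  have cP: "convex P" unfolding P_def P_N_def by simp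
  have FP: "F face_of P" and dimF: "aff_dim F = aff_dim P - 1"
    using assms(3) unfolding is_facet_def F_def P_def by auto
  have etaP: "eta K \<in> P" if "K \<in> DAG" for K
    unfolding P_def P_N_def using that by (intro hull_inc) auto
  have etaF: "eta K \<in> F" if "K \<in> D" for K
    unfolding F_def using that by (intro hull_inc) auto
  have PB: "P \<subseteq> Bx" unfolding P_def P_N_def by (rule hull_Bx)
  have empDAG: "{} \<in> DAG" by (simp add: DAG_def acyclic_def)
  have part2: "\<exists>G\<in>D. pa G v = B" if vB: "(v,B) \<in> Upsilon" for v B
  proof (rule ccontr)
    assume nG: "\<not> (\<exists>G\<in>D. pa G v = B)"
    define a' :: "real ^ ('n \<times> 'n set)" where "a' = axis (v,B) (-1)"
    have ax: "a' \<bullet> x = - (x $ (v,B))" for x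
      unfolding a'_def by (simp add: inner_axis')
    define T where "T = P \<inter> {x. a' \<bullet> x = 0}"
    have TP: "T face_of P" unfolding T_def
    proof (rule face_of_Int_supporting_hyperplane_le[OF cP])
      fix x assume "x \<in> P"
      then have "x \<in> Bx" using PB by auto
      then show "a' \<bullet> x \<le> 0" by (simp add: ax Bx_def)
    qed
    have cT: "convex T" unfolding T_def by (intro convex_Int cP convex_hyperplane)
    have FT: "F \<subseteq> T" unfolding F_def
    proof (rule hull_minimal[where S=convex, OF _ cT])
      show "eta ` D \<subseteq> T"
      proof
        fix x assume "x \<in> eta ` D"
        then obtain G where G: "G \<in> D" "x = eta G" by auto
        then have "eta G \<in> P" using etaP assms(2) by auto
        moreover have "eta G $ (v,B) = 0" using nG G by (auto simp: eta_def)
        ultimately show "x \<in> T" using G by (simp add: T_def ax)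
      qed
    qed
    define G0 where "G0 = (\<lambda>x. (x,v)) ` B"
    have "v \<notin> B" "B \<noteq> {}" using vB by (auto simp: Upsilon_def)
    then have G0D: "G0 \<in> DAG" unfolding G0_def DAG_def using star_acyclic[of v B] by simp
    have "pa G0 v = B" by (auto simp: G0_def pa_def)
    then have "eta G0 $ (v,B) = 1" using vB by (simp add: eta_def)
    then have "eta G0 \<notin> T" by (simp add: T_def ax)
    then have TnP: "T \<noteq> P" using etaP[OF G0D] by auto
    have "eta {} $ (v,B) = 0" using \<open>B \<noteq> {}\<close> by (auto simp: eta_def pa_def)
    then have e0T: "eta {} \<in> T" using etaP[OF empDAG] by (simp add: T_def ax)
    have "T \<subseteq> P" unfolding T_def by blast
    then have FT': "F face_of T" by (rule face_of_subset[OF FP FT])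
    have "aff_dim T < aff_dim P" by (rule face_of_aff_dim_lt[OF cP TP TnP])
    moreover have "F = T"
    proof (rule ccontr)
      assume "F \<noteq> T"
      then have "aff_dim F < aff_dim T" by (rule face_of_aff_dim_lt[OF cT FT'])
      then show False using \<open>aff_dim T < aff_dim P\<close> dimF by linarith
    qed
    then have "eta {} \<in> convex hull (eta ` D)" using e0T F_def by simp
    then have "{} \<in> D" by (rule mem_hull_imp[OF empDAG assms(2)])
    then show False using assms(4) by simp
  qed
  have "polyhedron P" unfolding P_def P_N_def
    by (intro polytope_imp_polyhedron polytope_convex_hull) simp
  then have "F exposed_face_of P" using FP exposed_face_of_polyhedron by blast
  then obtain a b where ab: "P \<subseteq> {x. a \<bullet> x \<le> b}" "F = P \<inter> {x. a \<bullet> x = b}"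
    unfolding exposed_face_of_def by blast
  have mono: "cc a v B \<le> cc a v C" if "B \<subseteq> C" "v \<notin> C" for v B C
  proof (cases "C = {}")
    case True then show ?thesis using that by simp
  next
    case False
    then have "(v,C) \<in> Upsilon" using that by (simp add: Upsilon_def)
    then obtain K where K: "K \<in> D" "pa K v = C" using part2 by blast
    define K' where "K' = {e\<in>K. snd e \<noteq> v} \<union> (\<lambda>x. (x,v)) ` B"
    have "K' \<subseteq> K" using K that unfolding K'_def pa_def by auto
    moreover have "acyclic K" using K assms(2) by (auto simp: DAG_def)
    ultimately have "K' \<in> DAG" by (simp add: DAG_def acyclic_subset)
    then have "a \<bullet> eta K' \<le> b" using etaP ab(1) by auto
    moreover have "a \<bullet> eta K = b" using etaF[OF K(1)] ab(2) by auto
    ultimately have le: "(\<Sum>w\<in>UNIV. cc a w (pa K' w)) \<le> (\<Sum>w\<in>UNIV. cc a w (pa K w))"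
      by (simp add: ell_eq)
    have paK': "pa K' w = (if w = v then B else pa K w)" for w
      by (auto simp: K'_def pa_def)
    have s1: "(\<Sum>w\<in>UNIV. cc a w (pa K' w)) = cc a v B + (\<Sum>w\<in>UNIV - {v}. cc a w (pa K w))"
      by (subst sum.remove[of UNIV v]) (simp_all add: paK')
    have s2: "(\<Sum>w\<in>UNIV. cc a w (pa K w)) = cc a v C + (\<Sum>w\<in>UNIV - {v}. cc a w (pa K w))"
      by (subst sum.remove[of UNIV v]) (simp_all add: K)
    show ?thesis using le s1 s2 by linarith
  qed
  have part1: "H \<in> D" if G: "G \<in> D" and H: "H \<in> DAG" "G \<subseteq> H" for G H
  proof -
    have "acyclic H" using H by (simp add: DAG_def)
    have "cc a w (pa G w) \<le> cc a w (pa H w)" for w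
    proof (rule mono)
      show "pa G w \<subseteq> pa H w" using H by (auto simp: pa_def)
      show "w \<notin> pa H w" using acyclic_irr[OF \<open>acyclic H\<close>] by (auto simp: pa_def)
    qed
    then have "(\<Sum>w\<in>UNIV. cc a w (pa G w)) \<le> (\<Sum>w\<in>UNIV. cc a w (pa H w))"
      by (intro sum_mono)
    moreover have "a \<bullet> eta G = b" using etaF[OF G] ab(2) by auto
    moreover have "a \<bullet> eta H \<le> b" using etaP[OF H(1)] ab(1) by auto
    ultimately have "a \<bullet> eta H = b" by (simp add: ell_eq)
    then have "eta H \<in> F" using ab(2) etaP[OF H(1)] by auto
    then show ?thesis using mem_hull_imp[OF H(1) assms(2)] F_def by simp
  qed
  show ?thesis
  proof
    show "\<forall>G\<in>D. \<forall>H\<in>DAG. G \<subseteq> H \<longrightarrow> H \<in> D" using part1 by blast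
    show "\<forall>(a, B)\<in>(Upsilon :: ('n \<times> 'n set) set). \<exists>G\<in>D. pa G a = B"
      using part2 by auto
  qed
qed

end
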